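(* Let $p$ be an odd prime, $q\in\mathbb{C}_p$ with $|q-1|_p<1$, $\alpha\in\mathbb{N}\cup\{0\}$, $h\in\mathbb{N}$, and let $n,k$ be nonnegative integers with $n>k$. Then \[ \sum_{l=0}^{n-k}\binom{n-k}{l}(-1)^l\frac{\widetilde{G}_{l+k+1,q}^{(\alpha,h)}}{l+k+1}=\begin{cases}[2]_q+q^{h+1}\dfrac{\widetilde{G}_{n+1,q^{-1}}^{(\alpha,h)}}{n+1} & \text{if } k=0,\\[2mm] \displaystyle\sum_{l=0}^{k}\binom{k}{l}(-1)^{k+l}\Big\{[2]_q+q^{h+1}\frac{\widetilde{G}_{n-l+1,q^{-1}}^{(\alpha,h)}}{n-l+1}\Big\} & \text{if } k\neq 0.\end{cases} \]
   Context: For $x\in\mathbb{Z}_p$ write $[x]_q=\frac{1-q^x}{1-q}$, and $[2]_q=1+q$. For a uniformly differentiable $f:\mathbb{Z}_p\to\mathbb{C}_p$, the fermionic $p$-adic $q$-integral is $\int_{\mathbb{Z}_p}f(\xi)\,d\mu_{-q}(\xi)=\lim_{N\to\infty}\frac{1}{[p^N]_{-q}}\sum_{\xi=0}^{p^N-1}f(\xi)(-q)^{\xi}$, with $[p^N]_{-q}=\frac{1+q^{p^N}}{1+q}$. The $(h,q)$-Genocchi polynomials with weight $\alpha$ are defined for $n\ge0$, $x\in\mathbb{Z}_p$ by $\frac{\widetilde{G}_{n+1,q}^{(\alpha,h)}(x)}{n+1}=\int_{\mathbb{Z}_p}q^{(h-1)\xi}[x+\xi]_{q^{\alpha}}^n\,d\mu_{-q}(\xi)$,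 and the numbers are $\widetilde{G}_{n,q}^{(\alpha,h)}=\widetilde{G}_{n,q}^{(\alpha,h)}(0)$. The numbers $\widetilde{G}_{n,q^{-1}}^{(\alpha,h)}$ are obtained by replacing $q$ by $q^{-1}$ everywhere: $\frac{\widetilde{G}_{n+1,q^{-1}}^{(\alpha,h)}}{n+1}=\int_{\mathbb{Z}_p}q^{(1-h)\xi}[\xi]_{q^{-\alpha}}^n\,d\mu_{-q^{-1}}(\xi)$. *)

theory Defs
  imports Complex_Main "HOL-Computational_Algebra.Computational_Algebra"
begin

text \<open>We work in an arbitrary field K carrying an
absolute value absv that is non-archimedean, restricts to the p-adic absolute value on
the integers, and makes K complete and algebraically closed (C_p is such a field).\<close>

definition Cp_like :: "nat \<Rightarrow> ('a::field \<Rightarrow> real) \<Rightarrow> bool" where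
  "Cp_like p absv \<longleftrightarrow>
     (\<forall>x. absv x \<ge> 0) \<and>
     (\<forall>x. absv x = 0 \<longleftrightarrow> x = 0) \<and>
     (\<forall>x y. absv (x * y) = absv x * absv y) \<and>
     (\<forall>x y. absv (x + y) \<le> max (absv x) (absv y)) \<and>
     (\<forall>m::int. m \<noteq> 0 \<longrightarrow>
        absv (of_int m) = real p powr (- real (multiplicity (int p) m))) \<and>
     (\<forall>X::nat \<Rightarrow> 'a. (\<forall>e>0. \<exists>N. \<forall>m\<ge>N. \<forall>n\<ge>N. absv (X m - X n) < e) \<longrightarrow>
        (\<exists>L. (\<lambda>n. absv (X n - L)) \<longlonglongrightarrow> 0)) \<and>
     (\<forall>P::'a poly. degree P \<noteq> 0 \<longrightarrow> (\<exists>x. poly P x = 0))"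

definition qnum :: "'a::field \<Rightarrow> nat \<Rightarrow> 'a" where
  "qnum q x = (if q = 1 then of_nat x else (1 - q ^ x) / (1 - q))"

definition ferm_int :: "nat \<Rightarrow> ('a::field \<Rightarrow> real) \<Rightarrow> 'a \<Rightarrow> (nat \<Rightarrow> 'a) \<Rightarrow> 'a" where
  "ferm_int p absv q f = (THE L. (\<lambda>N. absv (
      (\<Sum>\<xi><p ^ N. f \<xi> * (- q) ^ \<xi>) / ((1 + q ^ (p ^ N)) / (1 + q)) - L)) \<longlonglongrightarrow> 0)"

text \<open>(h,q)-Genocchi numbers with weight alpha:
  G_{n+1}/(n+1) = int q^{(h-1) xi} [xi]_{q^alpha}^n d mu_{-q}(xi); G_0 := 0.\<close>
definition genocchi :: "nat \<Rightarrow> ('a::field \<Rightarrow> real) \<Rightarrow> 'a \<Rightarrow> nat \<Rightarrow> nat \<Rightarrow> nat \<Rightarrow> 'a" where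
  "genocchi p absv q \<alpha> h n =
     (if n = 0 then 0 else
      of_nat n * ferm_int p absv q (\<lambda>\<xi>. q ^ ((h - 1) * \<xi>) * qnum (q ^ \<alpha>) \<xi> ^ (n - 1)))"

end

theory Submission imports Defs begin



lemma qnum_Suc1: "qnum s (Suc x) = 1 + s * qnum s x"
  unfolding qnum_def by (auto simp: field_simps)
lemma qnum_Suc2: "qnum s (Suc x) = qnum s x + s ^ x"
  unfolding qnum_def by (auto simp: field_simps)
lemma qnum_0 [simp]: "qnum s 0 = 0" unfolding qnum_def by simp
lemma qnum_add: "qnum S (a + b) = qnum S a + S ^ a * qnum S b"
proof (induction a)
  case 0 then show ?case by simp
next
  case (Suc a)
  have "qnum S (Suc a + b) = 1 + S * qnum S (a + b)" by (simp add: qnum_Suc1)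
  also have "\<dots> = qnum S (Suc a) + S ^ Suc a * qnum S b" using Suc by (simp add: qnum_Suc1 algebra_simps)
  finally show ?case .
qed

lemma qnum_inv_rel: assumes "s \<noteq> 0" shows "s ^ x * qnum (inverse s) x = s * qnum s x"
proof (induction x)
  case 0 then show ?case by simp
next
  case (Suc x)
  have e: "s ^ Suc x * inverse s ^ x = s" using assms by (simp add: power_inverse field_simps)
  have "s ^ Suc x * qnum (inverse s) (Suc x) = s * (s ^ x * qnum (inverse s) x) + s ^ Suc x * inverse s ^ x"
    by (simp add: qnum_Suc2 algebra_simps)
  also have "\<dots> = s * (s * qnum s x) + s" using Suc e by simp
  also have "\<dots> = s * qnum s (Suc x)" by (simp add: qnum_Suc1 algebra_simps)
  finally show ?case .
qed

lemma qnum_refl: assumes "s \<noteq> 0" "j < M"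
  shows "qnum (inverse s) (M - Suc j) = qnum (inverse s) M - inverse s ^ (M - 1) * qnum s (Suc j)"
proof -
  define a where "a = M - Suc j"
  have M: "M = a + Suc j" using assms(2) a_def by simp
  have "s ^ Suc j * qnum (inverse s) (Suc j) = s * qnum s (Suc j)" by (rule qnum_inv_rel[OF assms(1)])
  hence q1: "qnum (inverse s) (Suc j) = inverse s ^ j * qnum s (Suc j)"
    using assms(1) by (simp add: power_inverse field_simps)
  have "qnum (inverse s) M = qnum (inverse s) a + inverse s ^ a * qnum (inverse s) (Suc j)"
    unfolding M by (rule qnum_add)
  also have "inverse s ^ a * qnum (inverse s) (Suc j) = inverse s ^ (M - 1) * qnum s (Suc j)"
    unfolding q1 M by (simp add: power_add mult.assoc)
  finally show ?thesis unfolding a_def by simp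
qed

lemma T2: fixes q :: "'a::field" assumes "q \<noteq> 0" "j < M"
  shows "inverse q ^ ((h - 1) * (M - Suc j)) = inverse (q ^ (h - 1)) ^ (M - 1) * (q ^ (h - 1)) ^ j"
proof -
  define t where "t = q ^ (h - 1)"
  define a where "a = M - Suc j"
  have M: "M - 1 = a + j" using assms(2) a_def by simp
  have t0: "t \<noteq> 0" using assms(1) t_def by simp
  have "inverse q ^ ((h - 1) * a) = inverse t ^ a" unfolding t_def by (simp add: power_mult power_inverse)
  also have "\<dots> = inverse t ^ (a + j) * t ^ j" using t0 by (simp add: power_add power_inverse field_simps)
  finally show ?thesis unfolding a_def[symmetric] M t_def .
qed

lemma gen: fixes q x :: "'a::field" assumes "q \<noteq> 0" "x \<noteq> 0" "1 + q * x \<noteq> 0"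
  shows "(1 + inverse q) / (1 + inverse (q * x)) = x * ((1 + q) / (1 + q * x))"
proof -
  have "q + q * (q * x) \<noteq> 0" using assms by (metis distrib_left mult_1_right mult_eq_0_iff)
  thus ?thesis using assms by (simp add: field_simps)
qed

lemma T1: fixes q :: "'a::field" assumes "q \<noteq> 0" "1 + q ^ M \<noteq> 0" "odd M" "j < M"
  shows "(1 + inverse q) / (1 + inverse q ^ M) * (- inverse q) ^ (M - Suc j) = (1 + q) / (1 + q ^ M) * (- q) ^ j"
proof -
  define a where "a = M - Suc j"
  have M: "M = Suc (a + j)" using assms(4) a_def by simp
  have ev: "even (a + j)" using assms(3) M by simp
  have s1: "(-1 :: 'a) ^ a = (-1) ^ j" unfolding minus_one_power_iff using ev by simp
  have qM: "q ^ M = q * q ^ (a + j)" unfolding M by simp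
  have iM: "inverse q ^ M = inverse (q * q ^ (a + j))" unfolding qM[symmetric] by (rule power_inverse)
  have A: "(1 + inverse q) / (1 + inverse q ^ M) = q ^ (a + j) * ((1 + q) / (1 + q ^ M))"
    unfolding iM qM by (rule gen) (use assms qM in auto)
  have B: "(- inverse q) ^ a = (-1) ^ j * inverse (q ^ a)"
    by (subst power_minus) (simp only: s1 power_inverse)
  have C: "q ^ (a + j) * inverse (q ^ a) = q ^ j" using assms(1) by (simp add: power_add)
  have D: "(- q) ^ j = (-1) ^ j * q ^ j" by (rule power_minus)
  show ?thesis unfolding a_def[symmetric] A B D C[symmetric] by (simp only: mult_ac)
qed

lemma refl_sum0: fixes q :: "'a::field" assumes "q \<noteq> 0" "1 + q ^ M \<noteq> 0" "odd M"
  shows "(1 + inverse q) / (1 + inverse q ^ M) * (\<Sum>\<xi><M. inverse q ^ ((h - 1) * \<xi>) * qnum (inverse q ^ \<alpha>) \<xi> ^ n * (- inverse q) ^ \<xi>)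
   = inverse (q ^ (h - 1)) ^ (M - 1) * ((1 + q) / (1 + q ^ M) * (\<Sum>j<M. (q ^ (h - 1)) ^ j *
        (qnum (inverse (q ^ \<alpha>)) M - inverse (q ^ \<alpha>) ^ (M - 1) * qnum (q ^ \<alpha>) (Suc j)) ^ n * (- q) ^ j))"
proof -
  have s0: "q ^ \<alpha> \<noteq> 0" using assms(1) by simp
  have "(\<Sum>\<xi><M. inverse q ^ ((h - 1) * \<xi>) * qnum (inverse q ^ \<alpha>) \<xi> ^ n * (- inverse q) ^ \<xi>)
      = (\<Sum>j<M. inverse q ^ ((h - 1) * (M - Suc j)) * qnum (inverse q ^ \<alpha>) (M - Suc j) ^ n * (- inverse q) ^ (M - Suc j))"
    by (rule sum.nat_diff_reindex[symmetric])
  hence "(1 + inverse q) / (1 + inverse q ^ M) * (\<Sum>\<xi><M. inverse q ^ ((h - 1) * \<xi>) * qnum (inverse q ^ \<alpha>) \<xi> ^ n * (- inverse q) ^ \<xi>)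
      = (\<Sum>j<M. (1 + inverse q) / (1 + inverse q ^ M) * (inverse q ^ ((h - 1) * (M - Suc j)) * qnum (inverse q ^ \<alpha>) (M - Suc j) ^ n * (- inverse q) ^ (M - Suc j)))"
    by (simp add: sum_distrib_left)
  also have "\<dots> = (\<Sum>j<M. inverse (q ^ (h - 1)) ^ (M - 1) * ((1 + q) / (1 + q ^ M) * ((q ^ (h - 1)) ^ j *
        (qnum (inverse (q ^ \<alpha>)) M - inverse (q ^ \<alpha>) ^ (M - 1) * qnum (q ^ \<alpha>) (Suc j)) ^ n * (- q) ^ j)))"
  proof (rule sum.cong[OF refl])
    fix j assume "j \<in> {..<M}"
    hence j: "j < M" by simp
    note e1 = T1[OF assms j]
    note e2 = T2[OF assms(1) j, of h]
    have e3: "qnum (inverse q ^ \<alpha>) (M - Suc j) = qnum (inverse (q ^ \<alpha>)) M - inverse (q ^ \<alpha>) ^ (M - 1) * qnum (q ^ \<alpha>) (Suc j)"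
      using qnum_refl[OF s0 j] by (simp only: power_inverse)
    show "(1 + inverse q) / (1 + inverse q ^ M) * (inverse q ^ ((h - 1) * (M - Suc j)) * qnum (inverse q ^ \<alpha>) (M - Suc j) ^ n * (- inverse q) ^ (M - Suc j))
      = inverse (q ^ (h - 1)) ^ (M - 1) * ((1 + q) / (1 + q ^ M) * ((q ^ (h - 1)) ^ j *
        (qnum (inverse (q ^ \<alpha>)) M - inverse (q ^ \<alpha>) ^ (M - 1) * qnum (q ^ \<alpha>) (Suc j)) ^ n * (- q) ^ j))"
    proof -
      have X: "((1 + inverse q) / (1 + inverse q ^ M) * (- inverse q) ^ (M - Suc j)) * (inverse q ^ ((h - 1) * (M - Suc j)) * qnum (inverse q ^ \<alpha>) (M - Suc j) ^ n)
        = ((1 + q) / (1 + q ^ M) * (- q) ^ j) * (inverse (q ^ (h - 1)) ^ (M - 1) * (q ^ (h - 1)) ^ j *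
        (qnum (inverse (q ^ \<alpha>)) M - inverse (q ^ \<alpha>) ^ (M - 1) * qnum (q ^ \<alpha>) (Suc j)) ^ n)"
        by (simp only: e1 e2 e3)
      show ?thesis using X by (simp only: mult_ac)
    qed
  qed
  also have "\<dots> = inverse (q ^ (h - 1)) ^ (M - 1) * ((1 + q) / (1 + q ^ M) * (\<Sum>j<M. (q ^ (h - 1)) ^ j *
        (qnum (inverse (q ^ \<alpha>)) M - inverse (q ^ \<alpha>) ^ (M - 1) * qnum (q ^ \<alpha>) (Suc j)) ^ n * (- q) ^ j))"
    by (simp only: sum_distrib_left)
  finally show ?thesis .
qed


lemma P1: fixes x :: "'a::comm_ring_1"
  shows "x ^ k * (1 - x) ^ m = (\<Sum>l\<in>{0..m}. of_nat (m choose l) * (-1) ^ l * x ^ (l + k))"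
proof -
  have "(1 - x) ^ m = (- x + 1) ^ m" by simp
  also have "\<dots> = (\<Sum>l\<le>m. of_nat (m choose l) * (- x) ^ l)" by (simp only: binomial_ring power_one mult_1_right)
  finally have "x ^ k * (1 - x) ^ m = (\<Sum>l\<le>m. x ^ k * (of_nat (m choose l) * (- x) ^ l))"
    by (simp add: sum_distrib_left)
  also have "\<dots> = (\<Sum>l\<le>m. of_nat (m choose l) * (-1) ^ l * x ^ (l + k))"
    by (rule sum.cong) (simp_all add: power_add power_minus[of x] mult_ac)
  finally show ?thesis by (simp add: atMost_atLeast0)
qed

lemma P2: fixes y :: "'a::comm_ring_1" assumes "k \<le> n"
  shows "(1 - y) ^ k * y ^ (n - k) = (\<Sum>l\<in>{0..k}. of_nat (k choose l) * (-1) ^ (k + l) * y ^ (n - l))"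
proof -
  have "(1 - y) ^ k = (-1) ^ k * (-1 + y) ^ k" by (simp flip: power_mult_distrib)
  also have "(-1 + y) ^ k = (\<Sum>l\<le>k. of_nat (k choose l) * (-1) ^ l * y ^ (k - l))" by (rule binomial_ring)
  finally have "(1 - y) ^ k * y ^ (n - k) = (\<Sum>l\<le>k. (-1) ^ k * (of_nat (k choose l) * (-1) ^ l * y ^ (k - l)) * y ^ (n - k))"
    by (simp add: sum_distrib_left sum_distrib_right)
  also have "\<dots> = (\<Sum>l\<le>k. of_nat (k choose l) * (-1) ^ (k + l) * y ^ (n - l))"
  proof (rule sum.cong[OF refl])
    fix l assume "l \<in> {..k}"
    hence "k - l + (n - k) = n - l" using assms by auto
    hence "y ^ (k - l) * y ^ (n - k) = y ^ (n - l)" by (metis power_add)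
    thus "(-1) ^ k * (of_nat (k choose l) * (-1) ^ l * y ^ (k - l)) * y ^ (n - k) = of_nat (k choose l) * (-1) ^ (k + l) * y ^ (n - l)"
      by (simp add: power_add mult_ac)
  qed
  finally show ?thesis by (simp add: atMost_atLeast0)
qed

locale cpl =
  fixes p :: nat and absv :: "'a::field \<Rightarrow> real"
  assumes pr: "prime p" and od: "odd p" and cp: "Cp_like p absv"
begin

lemma nn: "absv x \<ge> 0" using cp unfolding Cp_like_def by blast
lemma z: "absv x = 0 \<longleftrightarrow> x = 0" using cp unfolding Cp_like_def by blast
lemma mul: "absv (x*y) = absv x * absv y" using cp unfolding Cp_like_def by blast
lemma ul: "absv (x+y) \<le> max (absv x) (absv y)" using cp unfolding Cp_like_def by blast
lemma ai: "m \<noteq> 0 \<Longrightarrow> absv (of_int m) = real p powr (- real (multiplicity (int p) m))"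
  using cp unfolding Cp_like_def by blast

lemma z0 [simp]: "absv 0 = 0" by (simp add: z)

lemma one: "absv 1 = 1"
proof -
  have "absv 1 = absv 1 * absv 1" using mul[of 1 1] by simp
  moreover have "absv 1 \<noteq> 0" using z by simp
  ultimately show ?thesis by simp
qed

lemma minus: "absv (-x) = absv x"
proof -
  have "absv (-1) * absv (-1) = 1" using mul[of "-1" "-1"] one by simp
  hence "absv (-1) = 1" using nn[of "-1"]
    by (metis abs_of_nonneg abs_one abs_mult_self_eq real_sqrt_abs2 real_sqrt_one)
  thus ?thesis using mul[of "-1" x] by simp
qed

lemma dc: "absv (x - y) = absv (y - x)" using minus[of "x-y"] by simp

lemma tri: "absv (x+y) \<le> absv x + absv y"
  using ul[of x y] nn[of x] nn[of y] by linarith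

lemma ul_diff: "absv (x-y) \<le> max (absv x) (absv y)"
  using ul[of x "-y"] minus[of y] by simp

lemma eqabs: assumes "absv (x - y) < absv y" shows "absv x = absv y"
proof -
  have "absv x \<le> max (absv (x-y)) (absv y)" using ul[of "x-y" y] by simp
  moreover have "absv y \<le> max (absv x) (absv (y-x))" using ul[of x "y-x"] by simp
  ultimately show ?thesis using assms dc[of x y] by linarith
qed

lemma sum_le: assumes "finite A" "\<And>i. i\<in>A \<Longrightarrow> absv (f i) \<le> B" "B \<ge> 0"
  shows "absv (\<Sum>i\<in>A. f i) \<le> B"
  using assms
proof (induction A rule: finite_induct)
  case empty then show ?case using z by simp
next
  case (insert x F)
  then show ?case using ul[of "f x" "sum f F"] by force
qed

lemma pos: "p > 1" using pr prime_gt_1_nat by blast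

lemma int_le1: "absv (of_int m) \<le> 1"
proof (cases "m = 0")
  case True then show ?thesis using z by simp
next
  case False
  have "real p powr (- real (multiplicity (int p) m)) \<le> 1"
    using pos by (simp add: powr_minus_divide ge_one_powr_ge_zero)
  then show ?thesis using ai[OF False] by simp
qed

lemma nat_le1: "absv (of_nat m) \<le> 1" using int_le1[of "int m"] by simp

lemma int_dvd: assumes "int p dvd m" shows "absv (of_int m) \<le> 1 / real p"
proof (cases "m = 0")
  case True then show ?thesis using z by simp
next
  case False
  have "multiplicity (int p) m \<ge> 1" using assms False
    using pos by (intro multiplicity_geI) auto
  hence "real p powr (- real (multiplicity (int p) m)) \<le> real p powr (-1)"
    using pos by (intro powr_mono) auto
  then show ?thesis using ai[OF False] pos by (simp add: powr_minus_divide)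
qed

lemma pow_p: "absv (of_nat (p ^ N)) = (1 / real p) ^ N"
proof -
  have "p ^ N \<noteq> 0" using pos by simp
  hence "absv (of_int (int p ^ N)) = real p powr (- real (multiplicity (int p) (int p ^ N)))"
    using ai[of "int p ^ N"] by simp
  also have "multiplicity (int p) (int p ^ N) = N"
    using pos by (simp add: multiplicity_same_power')
  finally show ?thesis using pos by (simp add: powr_minus_divide powr_realpow power_one_over)
qed

lemma two: "absv (2::'a) = 1"
proof -
  have "\<not> int p dvd 2"
  proof
    assume "int p dvd 2"
    hence "p dvd 2" by (metis int_dvd_int_iff of_nat_numeral)
    hence "p \<le> 2" by (simp add: dvd_imp_le)
    hence "p = 2" using pos by simp
    thus False using od by simp
  qed
  hence "multiplicity (int p) 2 < 1" using pos by (intro multiplicity_lessI) auto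
  thus ?thesis using ai[of 2] pos by simp
qed

lemma char0: "n \<noteq> 0 \<Longrightarrow> (of_nat n :: 'a) \<noteq> 0"
proof
  assume "n \<noteq> 0" "(of_nat n :: 'a) = 0"
  hence "absv (of_int (int n) :: 'a) = 0" using z by simp
  moreover have "absv (of_int (int n) :: 'a) > 0" using ai[of "int n"] \<open>n\<noteq>0\<close> pos by simp
  ultimately show False by simp
qed

definition tz :: "(nat \<Rightarrow> 'a) \<Rightarrow> bool" where
  "tz X \<longleftrightarrow> (\<lambda>N. absv (X N)) \<longlonglongrightarrow> 0"

definition conv :: "(nat \<Rightarrow> 'a) \<Rightarrow> 'a \<Rightarrow> bool" where
  "conv X L \<longleftrightarrow> tz (\<lambda>N. X N - L)"

lemma tz_le: assumes "\<And>N. absv (X N) \<le> Y N" "Y \<longlonglongrightarrow> 0" shows "tz X"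
  unfolding tz_def
  by (rule tendsto_sandwich[of "\<lambda>_. 0" _ _ Y]) (use assms nn in auto)

lemma tz_0: "tz (\<lambda>N. 0)" unfolding tz_def by simp

lemma tz_add: "tz X \<Longrightarrow> tz Y \<Longrightarrow> tz (\<lambda>N. X N + Y N)"
  unfolding tz_def by (rule tz_le[unfolded tz_def, OF tri]) (rule tendsto_add_zero)

lemma tz_minus: "tz X \<Longrightarrow> tz (\<lambda>N. - X N)"
  unfolding tz_def by (simp add: minus)

lemma tz_diff: "tz X \<Longrightarrow> tz Y \<Longrightarrow> tz (\<lambda>N. X N - Y N)"
  using tz_add[of X "\<lambda>N. - Y N"] tz_minus[of Y] by simp

lemma tz_mult: assumes "tz X" "(\<lambda>N. absv (Y N)) \<longlonglongrightarrow> c" shows "tz (\<lambda>N. X N * Y N)"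
  unfolding tz_def
proof (rule tz_le[unfolded tz_def])
  show "absv (X N * Y N) \<le> absv (X N) * absv (Y N)" for N by (simp add: mul)
  show "(\<lambda>N. absv (X N) * absv (Y N)) \<longlonglongrightarrow> 0"
    using tendsto_mult[OF assms(1)[unfolded tz_def] assms(2)] by simp
qed

lemma tz_mult_bd: assumes "tz X" "\<And>N. absv (Y N) \<le> C" shows "tz (\<lambda>N. X N * Y N)"
  unfolding tz_def
proof (rule tz_le[unfolded tz_def])
  show "absv (X N * Y N) \<le> absv (X N) * C" for N using assms(2)[of N] nn[of "X N"]
    by (simp add: mul mult_left_mono)
  show "(\<lambda>N. absv (X N) * C) \<longlonglongrightarrow> 0"
    using tendsto_mult[OF assms(1)[unfolded tz_def] tendsto_const[of C]] by simp
qed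

lemma conv_abs: assumes "conv X L" shows "(\<lambda>N. absv (X N)) \<longlonglongrightarrow> absv L"
proof -
  have b: "\<bar>absv (X N) - absv L\<bar> \<le> absv (X N - L)" for N
  proof -
    have "absv (X N) \<le> absv (X N - L) + absv L" using tri[of "X N - L" L] by simp
    moreover have "absv L \<le> absv (L - X N) + absv (X N)" using tri[of "L - X N" "X N"] by simp
    ultimately show ?thesis using dc[of "X N" L] by linarith
  qed
  have b1: "- absv (X N - L) \<le> absv (X N) - absv L" for N using b[of N] by linarith
  have b2: "absv (X N) - absv L \<le> absv (X N - L)" for N using b[of N] by linarith
  have "(\<lambda>N. absv (X N) - absv L) \<longlonglongrightarrow> 0"
    by (rule tendsto_sandwich[of "\<lambda>N. - absv (X N - L)" _ _ "\<lambda>N. absv (X N - L)"])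
       (use b1 b2 assms[unfolded conv_def tz_def] tendsto_minus[of "\<lambda>N. absv (X N - L)" 0] in
        \<open>auto intro!: always_eventually\<close>)
  thus ?thesis using LIM_zero_iff by blast
qed

lemma conv_const: "conv (\<lambda>N. c) c" unfolding conv_def tz_def by simp

lemma conv_add: "conv X L \<Longrightarrow> conv Y K \<Longrightarrow> conv (\<lambda>N. X N + Y N) (L + K)"
  unfolding conv_def using tz_add[of "\<lambda>N. X N - L" "\<lambda>N. Y N - K"] by (simp add: algebra_simps)

lemma conv_minus: "conv X L \<Longrightarrow> conv (\<lambda>N. - X N) (- L)"
  unfolding conv_def using tz_minus[of "\<lambda>N. X N - L"] by (simp add: algebra_simps)

lemma conv_diff: "conv X L \<Longrightarrow> conv Y K \<Longrightarrow> conv (\<lambda>N. X N - Y N) (L - K)"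
  using conv_add[of X L "\<lambda>N. - Y N" "-K"] conv_minus[of Y K] by simp

lemma conv_mult: assumes "conv X L" "conv Y K" shows "conv (\<lambda>N. X N * Y N) (L * K)"
proof -
  have e: "X N * Y N - L * K = (X N - L) * Y N + (Y N - K) * L" for N by (simp add: algebra_simps)
  have "tz (\<lambda>N. (X N - L) * Y N)" using tz_mult assms(1)[unfolded conv_def] conv_abs[OF assms(2)] by blast
  moreover have "tz (\<lambda>N. (Y N - K) * L)"
    using tz_mult[of "\<lambda>N. Y N - K" "\<lambda>N. L" "absv L"] assms(2)[unfolded conv_def] by simp
  ultimately show ?thesis unfolding conv_def e by (rule tz_add)
qed

lemma conv_sum: "finite A \<Longrightarrow> (\<And>i. i \<in> A \<Longrightarrow> conv (X i) (L i)) \<Longrightarrow>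
  conv (\<lambda>N. \<Sum>i\<in>A. X i N) (\<Sum>i\<in>A. L i)"
proof (induction A rule: finite_induct)
  case empty then show ?case by (simp add: conv_const)
next
  case (insert x F) then show ?case using conv_add[of "X x" "L x"] by simp
qed

lemma conv_pow: assumes "conv X L" shows "conv (\<lambda>N. X N ^ m) (L ^ m)"
proof (induction m)
  case 0 then show ?case using conv_const[of 1] by simp
next
  case (Suc m) then show ?case using conv_mult[OF assms Suc] by simp
qed

lemma conv_tz: "conv X L \<Longrightarrow> tz (\<lambda>N. Y N - X N) \<Longrightarrow> conv Y L"
  unfolding conv_def using tz_add[of "\<lambda>N. Y N - X N" "\<lambda>N. X N - L"] by simp

lemma conv_unique: assumes "conv X L" "conv X K" shows "L = K"
proof -
  have "tz (\<lambda>N. (X N - K) - (X N - L))" using assms unfolding conv_def by (rule tz_diff[rotated])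
  hence "(\<lambda>N. absv (L - K)) \<longlonglongrightarrow> 0" unfolding tz_def by simp
  hence "absv (L - K) = 0" by (simp add: LIMSEQ_const_iff)
  thus ?thesis using z by simp
qed

definition un :: "'a \<Rightarrow> bool" where "un u \<longleftrightarrow> absv (u - 1) < 1"

lemma un_abs: "un u \<Longrightarrow> absv u = 1"
  unfolding un_def using eqabs[of u 1] one by simp

lemma un_1: "un 1" unfolding un_def by simp

lemma un_mult: assumes "un u" "un v" shows "un (u * v)"
proof -
  have "u * v - 1 = u * (v - 1) + (u - 1)" by (simp add: algebra_simps)
  hence "absv (u*v - 1) \<le> max (absv u * absv (v - 1)) (absv (u - 1))" using ul mul by metis
  thus ?thesis using assms un_abs[OF assms(1)] unfolding un_def by simp
qed

lemma un_pow: "un u \<Longrightarrow> un (u ^ m)" by (induction m) (auto simp: un_1 un_mult)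

lemma un_nz: "un u \<Longrightarrow> u \<noteq> 0" using un_abs z by force

lemma un_inv: assumes "un u" shows "un (inverse u)"
proof -
  have "inverse u - 1 = (1 - u) * inverse u" using un_nz[OF assms] by (simp add: field_simps)
  hence "absv (inverse u - 1) = absv (u - 1) * absv (inverse u)" using mul dc by metis
  moreover have "absv (inverse u) = 1" using mul[of u "inverse u"] un_nz[OF assms] un_abs[OF assms] one by simp
  ultimately show ?thesis using assms unfolding un_def by simp
qed

lemma un_plus1: assumes "un u" shows "absv (1 + u) = 1"
proof -
  have "1 + u - 2 = u - 1" by simp
  thus ?thesis using eqabs[of "1+u" 2] two assms unfolding un_def by simp
qed

lemma choose_small: assumes "0 < j" "j < p" shows "absv (of_nat (p choose j) :: 'a) \<le> 1 / real p"
proof -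
  have "p dvd (p choose j)" using dvd_choose_prime[OF assms(2)] assms pr by auto
  hence "int p dvd int (p choose j)" by simp
  thus ?thesis using int_dvd[of "int (p choose j)"] by simp
qed

lemma key_step: assumes "absv (v - 1) \<le> r" "r \<le> r0" "r0 < 1" "r \<ge> 0"
  shows "absv (v ^ p - 1) \<le> r * max (1 / real p) (r0 ^ (p - 1))"
proof -
  define y where "y = v - 1"
  define c where "c = max (1 / real p) (r0 ^ (p - 1))"
  have ay: "absv y \<le> r" using assms y_def by simp
  have r1: "r \<le> 1" using assms by simp
  have ps: "p = Suc (p - 1)" using pos by simp
  have "v ^ p = (y + 1) ^ p" by (simp add: y_def)
  also have "\<dots> = (\<Sum>j\<le>p. of_nat (p choose j) * y ^ j)" by (simp add: binomial_ring)
  also have "\<dots> = 1 + (\<Sum>i\<le>p-1. of_nat (p choose Suc i) * y ^ Suc i)"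
  proof -
    obtain m where m: "p = Suc m" using pos by (cases p) auto
    show ?thesis unfolding m by (subst sum.atMost_Suc_shift) simp
  qed
  finally have e: "v ^ p - 1 = (\<Sum>i\<le>p-1. of_nat (p choose Suc i) * y ^ Suc i)" by simp
  have "absv (of_nat (p choose Suc i) * y ^ Suc i) \<le> r * c" if "i \<le> p - 1" for i
  proof (cases "Suc i < p")
    case True
    have "absv (y ^ n) \<le> r ^ n" for n
      by (induction n) (use ay nn one assms(4) in \<open>auto simp: mul intro!: mult_mono\<close>)
    hence "absv (y ^ Suc i) \<le> r ^ Suc i" .
    also have "\<dots> \<le> r" using r1 assms(4) by (simp add: power_le_one mult_left_le)
    finally have "absv (y ^ Suc i) \<le> r" .
    hence "absv (of_nat (p choose Suc i) :: 'a) * absv (y ^ Suc i) \<le> 1 / real p * r"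
      by (intro mult_mono) (use choose_small[of "Suc i"] True nn in auto)
    hence "absv (of_nat (p choose Suc i) * y ^ Suc i) \<le> 1 / real p * r" by (simp only: mul)
    also have "\<dots> \<le> r * c"
    proof -
      have "1 / real p \<le> c" unfolding c_def by simp
      from mult_left_mono[OF this assms(4)] show ?thesis by (simp add: algebra_simps)
    qed
    finally show ?thesis .
  next
    case False
    hence i: "Suc i = p" using that pos by simp
    have "absv (y ^ n) \<le> r ^ n" for n
      by (induction n) (use ay nn one assms(4) in \<open>auto simp: mul intro!: mult_mono\<close>)
    hence "absv (of_nat (p choose Suc i) * y ^ Suc i) \<le> r ^ p" using i by simp
    also have "r ^ p = r * r ^ (p - 1)" using ps by (metis power_Suc)
    also have "\<dots> \<le> r * r0 ^ (p - 1)" using assms by (intro mult_left_mono power_mono) auto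
    also have "\<dots> \<le> r * c" unfolding c_def using assms(4) by (simp add: mult_left_mono)
    finally show ?thesis .
  qed
  hence "absv (v ^ p - 1) \<le> r * c" unfolding e
    by (intro sum_le) (use assms(4) pos in \<open>auto simp: c_def le_max_iff_disj\<close>)
  thus ?thesis by (simp add: c_def)
qed

lemma key: assumes "un u" shows "conv (\<lambda>N. u ^ (p ^ N)) 1"
proof -
  define r0 where "r0 = absv (u - 1)"
  define c where "c = max (1 / real p) (r0 ^ (p - 1))"
  have r0: "r0 < 1" "r0 \<ge> 0" using assms nn unfolding un_def r0_def by auto
  have c1: "c < 1" unfolding c_def using pos r0 by (auto simp: power_less_one_iff)
  have c0: "c \<ge> 0" unfolding c_def by (simp add: le_max_iff_disj)
  have cN: "c ^ N \<le> 1" for N using c0 c1 by (simp add: power_le_one)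
  have b: "absv (u ^ (p ^ N) - 1) \<le> r0 * c ^ N" for N
  proof (induction N)
    case 0 then show ?case by (simp add: r0_def)
  next
    case (Suc N)
    have h: "r0 * c ^ N \<le> r0" using cN[of N] r0 by (simp add: mult_left_le)
    have "absv ((u ^ (p ^ N)) ^ p - 1) \<le> (r0 * c ^ N) * c"
      using key_step[OF Suc h r0(1)] r0 c0 by (simp add: c_def)
    moreover have "u ^ (p ^ Suc N) = (u ^ (p ^ N)) ^ p" by (metis power_Suc2 power_mult)
    ultimately show ?case by (simp add: mult.commute mult.left_commute)
  qed
  have "(\<lambda>N. r0 * c ^ N) \<longlonglongrightarrow> 0"
    using tendsto_mult[OF tendsto_const[of r0] LIMSEQ_power_zero[of c]] c0 c1 by simp
  thus ?thesis unfolding conv_def using b by (intro tz_le) auto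
qed

lemma un_pow_abs: "un u \<Longrightarrow> absv (u ^ n) = 1" by (rule un_abs[OF un_pow])

lemma un_minus_pow_abs: assumes "un u" shows "absv ((- u) ^ n) = 1"
proof (induction n)
  case 0 then show ?case using one by simp
next
  case (Suc n)
  have "absv ((- u) ^ Suc n) = absv (- u) * absv ((- u) ^ n)" by (simp only: power_Suc mul)
  also have "\<dots> = 1" using Suc minus[of u] un_abs[OF assms] by simp
  finally show ?case .
qed

lemma conv_inv1: assumes "conv X L" "\<And>N. absv (X N) = 1" "absv L = 1"
  shows "conv (\<lambda>N. inverse (X N)) (inverse L)"
proof -
  have nz: "X N \<noteq> 0" "L \<noteq> 0" for N
  proof -
    show "X N \<noteq> 0" proof assume "X N = 0" thus False using assms(2)[of N] by simp qed
    show "L \<noteq> 0" proof assume "L = 0" thus False using assms(3) by simp qed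
  qed
  have e: "inverse (X N) - inverse L = (X N - L) * (- (inverse (X N) * inverse L))" for N
  proof -
    have "(X N - L) * (- (inverse (X N) * inverse L)) = L * inverse L * inverse (X N) - X N * inverse (X N) * inverse L"
      by (simp add: algebra_simps)
    also have "\<dots> = inverse (X N) - inverse L" using nz(1)[of N] nz(2) by simp
    finally show ?thesis by simp
  qed
  have b: "absv (- (inverse (X N) * inverse L)) \<le> 1" for N
  proof -
    have "absv (inverse (X N)) = 1" using mul[of "X N" "inverse (X N)"] nz(1)[of N] assms(2)[of N] one by simp
    moreover have "absv (inverse L) = 1" using mul[of L "inverse L"] nz(2) assms(3) one by simp
    ultimately show ?thesis by (simp only: minus mul)
  qed
  show ?thesis unfolding conv_def e
    by (rule tz_mult_bd[OF assms(1)[unfolded conv_def] b])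
qed

definition RS :: "'a \<Rightarrow> (nat \<Rightarrow> 'a) \<Rightarrow> nat \<Rightarrow> 'a" where
  "RS Q f N = (\<Sum>\<xi><p ^ N. f \<xi> * (- Q) ^ \<xi>) / ((1 + Q ^ (p ^ N)) / (1 + Q))"

lemma ferm_eq: assumes "conv (RS Q f) L" shows "ferm_int p absv Q f = L"
  unfolding ferm_int_def
proof (rule the_equality)
  show "(\<lambda>N. absv ((\<Sum>\<xi><p ^ N. f \<xi> * (- Q) ^ \<xi>) / ((1 + Q ^ p ^ N) / (1 + Q)) - L)) \<longlonglongrightarrow> 0"
    using assms unfolding conv_def tz_def RS_def .
  fix K assume "(\<lambda>N. absv ((\<Sum>\<xi><p ^ N. f \<xi> * (- Q) ^ \<xi>) / ((1 + Q ^ p ^ N) / (1 + Q)) - K)) \<longlonglongrightarrow> 0"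
  hence "conv (RS Q f) K" unfolding conv_def tz_def RS_def .
  thus "K = L" using conv_unique assms by blast
qed

lemma RS_alt: "RS Q f N = (1 + Q) / (1 + Q ^ (p ^ N)) * (\<Sum>\<xi><p ^ N. f \<xi> * (- Q) ^ \<xi>)"
  unfolding RS_def by (simp add: field_simps)

lemma RS_add: "RS Q (\<lambda>x. f x + g x) N = RS Q f N + RS Q g N"
  unfolding RS_alt by (simp add: algebra_simps sum.distrib)

lemma RS_diff: "RS Q (\<lambda>x. f x - g x) N = RS Q f N - RS Q g N"
  unfolding RS_alt by (simp add: algebra_simps sum_subtractf)

lemma RS_cmult: "RS Q (\<lambda>x. c * f x) N = c * RS Q f N"
  unfolding RS_alt by (simp add: algebra_simps sum_distrib_left)

lemma RS_sum: "finite A \<Longrightarrow> RS Q (\<lambda>x. \<Sum>i\<in>A. g i x) N = (\<Sum>i\<in>A. RS Q (g i) N)"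
  by (induction A rule: finite_induct) (auto simp: RS_add, simp add: RS_alt)

lemma absv_div: "absv (a / b) = absv a / absv b"
proof (cases "b = 0")
  case True then show ?thesis by simp
next
  case False
  have "absv a = absv (a / b) * absv b" using mul[of "a/b" b] False by simp
  moreover have "absv b > 0" using False z nn by (metis less_eq_real_def)
  ultimately show ?thesis by simp
qed

lemma RS_bound: assumes "un Q" "\<And>x. absv (f x) \<le> B" "B \<ge> 0"
  shows "absv (RS Q f N) \<le> B"
proof -
  have "absv ((1 + Q) / (1 + Q ^ (p ^ N))) = 1"
    unfolding absv_div using un_plus1[OF assms(1)] un_plus1[OF un_pow[OF assms(1)]] by simp
  moreover have "absv (\<Sum>\<xi><p ^ N. f \<xi> * (- Q) ^ \<xi>) \<le> B"
  proof (rule sum_le)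
    fix x show "absv (f x * (- Q) ^ x) \<le> B" using assms(2)[of x] un_minus_pow_abs[OF assms(1), of x]
      by (simp add: mul)
  qed (use assms in auto)
  ultimately show ?thesis unfolding RS_alt mul by simp
qed

lemma odd_M: "odd (p ^ N)" using od by simp

lemma RS_func: assumes "1 + Q \<noteq> 0" shows
  "Q * RS Q (\<lambda>x. f (Suc x)) N + RS Q f N = (1 + Q) / (1 + Q ^ (p ^ N)) * (f 0 + f (p ^ N) * Q ^ (p ^ N))"
proof -
  define M where "M = p ^ N"
  have "Q * (\<Sum>\<xi><M. f (Suc \<xi>) * (- Q) ^ \<xi>) = (\<Sum>\<xi><M. - (f (Suc \<xi>) * (- Q) ^ Suc \<xi>))"
    unfolding sum_distrib_left by (rule sum.cong) (simp_all add: algebra_simps)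
  also have "\<dots> = - (\<Sum>\<xi><M. f (Suc \<xi>) * (- Q) ^ Suc \<xi>)" by (rule sum_negf)
  finally have "Q * (\<Sum>\<xi><M. f (Suc \<xi>) * (- Q) ^ \<xi>) = - (\<Sum>\<xi><M. f (Suc \<xi>) * (- Q) ^ Suc \<xi>)" .
  moreover have "(\<Sum>\<xi><M. f \<xi> * (- Q) ^ \<xi> - f (Suc \<xi>) * (- Q) ^ Suc \<xi>) = f 0 * (-Q)^0 - f M * (-Q) ^ M"
    by (rule sum_lessThan_telescope')
  moreover have "(-Q) ^ M = - (Q ^ M)" using odd_M unfolding M_def by (simp add: power_minus_odd)
  ultimately have "Q * (\<Sum>\<xi><M. f (Suc \<xi>) * (- Q) ^ \<xi>) + (\<Sum>\<xi><M. f \<xi> * (- Q) ^ \<xi>) = f 0 + f M * Q ^ M"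
    by (simp only: sum_subtractf power_0 mult_1_right) (simp add: algebra_simps)
  moreover have "Q * (P * S1) + P * S0 = P * (Q * S1 + S0)" for P S1 S0 :: 'a by (simp add: algebra_simps)
  ultimately show ?thesis unfolding RS_alt M_def[symmetric] by metis
qed

lemma PN: assumes "un Q" shows "conv (\<lambda>N. (1 + Q) / (1 + Q ^ (p ^ N))) ((1 + Q) / 2)"
proof -
  have c: "conv (\<lambda>N. 1 + Q ^ (p ^ N)) (1 + 1)" by (rule conv_add[OF conv_const key[OF assms]])
  have a: "absv (1 + Q ^ (p ^ N)) = 1" for N by (rule un_plus1[OF un_pow[OF assms]])
  have t: "absv (1 + 1 :: 'a) = 1" using two by (simp only: one_add_one)
  have "conv (\<lambda>N. inverse (1 + Q ^ (p ^ N))) (inverse (1 + 1))"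
    by (rule conv_inv1[OF c a t])
  from conv_mult[OF conv_const[of "1+Q"] this]
  have "conv (\<lambda>N. (1 + Q) * inverse (1 + Q ^ (p ^ N))) ((1 + Q) * inverse (1 + 1))" .
  thus ?thesis by (simp only: divide_inverse[symmetric] one_add_one)
qed

lemma qnum_bd: assumes "un s" shows "absv (qnum s x) \<le> 1"
proof (induction x)
  case 0 then show ?case by simp
next
  case (Suc x)
  have "absv (1 + s * qnum s x) \<le> max (absv 1) (absv (s * qnum s x))" by (rule ul)
  then show ?case using Suc un_abs[OF assms] one by (simp add: qnum_Suc1 mul)
qed

lemma qnum_M: assumes "un s" shows "conv (\<lambda>N. qnum s (p ^ N)) 0"
proof (cases "s = 1")
  case True
  have "(\<lambda>N. (1 / real p) ^ N) \<longlonglongrightarrow> 0" using pos by (intro LIMSEQ_power_zero) auto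
  moreover have "absv (qnum s (p ^ N) - 0) = (1 / real p) ^ N" for N
    using True pow_p[of N] by (simp add: qnum_def)
  ultimately show ?thesis unfolding conv_def tz_def by simp
next
  case False
  have e: "qnum s (p ^ N) - 0 = (s ^ (p ^ N) - 1) * (- inverse (1 - s))" for N
    using False unfolding qnum_def by (simp add: field_simps)
  show ?thesis unfolding conv_def e
    by (rule tz_mult[OF key[OF assms, unfolded conv_def]]) (rule tendsto_const)
qed

lemma conv_div: "conv X L \<Longrightarrow> conv (\<lambda>N. X N / c) (L / c)"
  using conv_mult[OF _ conv_const[of "inverse c"]] by (simp add: divide_inverse)

lemma exist_q: assumes "un q" "un t" "un s"
  shows "\<exists>L. conv (RS q (\<lambda>x. t ^ x * qnum s x ^ l)) L"
proof (induction l rule: less_induct)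
  case (less l)
  define A where "A i = RS q (\<lambda>x. t ^ x * qnum s x ^ i)" for i
  from less have ex: "\<forall>i\<in>{..<l}. \<exists>L. conv (A i) L" unfolding A_def by auto
  obtain Lf where Lf0: "\<forall>i\<in>{..<l}. conv (A i) (Lf i)" using bchoice[OF ex] by blast
  hence Lf: "\<And>i. i < l \<Longrightarrow> conv (A i) (Lf i)" by simp
  have q1: "1 + q \<noteq> 0" using un_plus1[OF assms(1)] by force
  have d: "absv (1 + q * t * s ^ l) = 1"
    by (rule un_plus1) (intro un_mult un_pow assms)
  hence dnz: "1 + q * t * s ^ l \<noteq> 0" by force
  have shift: "RS q (\<lambda>x. t ^ Suc x * qnum s (Suc x) ^ l) N = t * (\<Sum>i\<le>l. of_nat (l choose i) * s ^ i * A i N)" for N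
  proof -
    have "t ^ Suc x * qnum s (Suc x) ^ l = (\<Sum>i\<le>l. (t * (of_nat (l choose i) * s ^ i)) * (t ^ x * qnum s x ^ i))" for x
    proof -
      have "(1 + s * qnum s x) ^ l = (\<Sum>i\<le>l. of_nat (l choose i) * (s * qnum s x) ^ i)"
        using binomial_ring[of "s * qnum s x" 1 l] by (simp add: add.commute)
      hence "t ^ Suc x * qnum s (Suc x) ^ l = (\<Sum>i\<le>l. t ^ Suc x * (of_nat (l choose i) * (s * qnum s x) ^ i))"
        unfolding qnum_Suc1 by (simp add: sum_distrib_left)
      also have "\<dots> = (\<Sum>i\<le>l. (t * (of_nat (l choose i) * s ^ i)) * (t ^ x * qnum s x ^ i))"
        by (rule sum.cong) (simp_all add: power_mult_distrib mult_ac)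
      finally show ?thesis .
    qed
    hence "RS q (\<lambda>x. t ^ Suc x * qnum s (Suc x) ^ l) N = (\<Sum>i\<le>l. (t * (of_nat (l choose i) * s ^ i)) * A i N)"
      by (simp add: RS_sum RS_cmult A_def)
    thus ?thesis by (simp add: sum_distrib_left algebra_simps)
  qed
  define P where "P N = (1 + q) / (1 + q ^ (p ^ N))" for N
  have fe: "q * (t * (\<Sum>i\<le>l. of_nat (l choose i) * s ^ i * A i N)) + A l N
      = P N * (0 ^ l + t ^ (p ^ N) * qnum s (p ^ N) ^ l * q ^ (p ^ N))" for N
  proof -
    note fe0 = RS_func[OF q1, of "\<lambda>x. t ^ x * qnum s x ^ l" N]
    note fe1 = fe0[unfolded shift]
    show ?thesis using fe1 unfolding A_def P_def by simp
  qed
  have eA: "A l N = (P N * (0 ^ l + t ^ (p ^ N) * qnum s (p ^ N) ^ l * q ^ (p ^ N))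
       - q * t * (\<Sum>i<l. of_nat (l choose i) * s ^ i * A i N)) / (1 + q * t * s ^ l)" for N
  proof -
    have "(\<Sum>i\<le>l. of_nat (l choose i) * s ^ i * A i N) = (\<Sum>i<l. of_nat (l choose i) * s ^ i * A i N) + s ^ l * A l N"
      by (simp add: lessThan_Suc_atMost[symmetric])
    with fe[of N] dnz show ?thesis by (simp add: field_simps)
  qed
  have c1: "conv (\<lambda>N. P N * (0 ^ l + t ^ (p ^ N) * qnum s (p ^ N) ^ l * q ^ (p ^ N)))
      ((1 + q) / 2 * (0 ^ l + 1 * 0 ^ l * 1))"
    unfolding P_def
    by (intro conv_mult conv_add conv_const PN assms key qnum_M conv_pow)
  have c2: "conv (\<lambda>N. q * t * (\<Sum>i<l. of_nat (l choose i) * s ^ i * A i N))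
      (q * t * (\<Sum>i<l. of_nat (l choose i) * s ^ i * Lf i))"
    by (intro conv_mult conv_const conv_sum) (auto intro: Lf)
  have "conv (A l) (((1 + q) / 2 * (0 ^ l + 1 * 0 ^ l * 1) - q * t * (\<Sum>i<l. of_nat (l choose i) * s ^ i * Lf i)) / (1 + q * t * s ^ l))"
    unfolding eA by (intro conv_div conv_diff c1 c2)
  thus ?case unfolding A_def by blast
qed


lemma qnum_add: "qnum S (a + b) = qnum S a + S ^ a * qnum S b"
proof (induction a)
  case 0 then show ?case by simp
next
  case (Suc a)
  have "qnum S (Suc a + b) = 1 + S * qnum S (a + b)" by (simp add: qnum_Suc1)
  also have "\<dots> = qnum S (Suc a) + S ^ Suc a * qnum S b" using Suc by (simp add: qnum_Suc1 algebra_simps)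
  finally show ?case .
qed

lemma qnum_inv_rel: assumes "s \<noteq> 0" shows "s ^ x * qnum (inverse s) x = s * qnum s x"
proof (induction x)
  case 0 then show ?case by simp
next
  case (Suc x)
  have e: "s ^ Suc x * inverse s ^ x = s" using assms by (simp add: power_inverse field_simps)
  have "s ^ Suc x * qnum (inverse s) (Suc x) = s * (s ^ x * qnum (inverse s) x) + s ^ Suc x * inverse s ^ x"
    by (simp add: qnum_Suc2 algebra_simps)
  also have "\<dots> = s * (s * qnum s x) + s" using Suc e by simp
  also have "\<dots> = s * qnum s (Suc x)" by (simp add: qnum_Suc1 algebra_simps)
  finally show ?case .
qed

lemma qnum_refl: assumes "s \<noteq> 0" "j < M"
  shows "qnum (inverse s) (M - Suc j) = qnum (inverse s) M - inverse s ^ (M - 1) * qnum s (Suc j)"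
proof -
  define a where "a = M - Suc j"
  have M: "M = a + Suc j" using assms(2) a_def by simp
  have "s ^ Suc j * qnum (inverse s) (Suc j) = s * qnum s (Suc j)" by (rule qnum_inv_rel[OF assms(1)])
  hence q1: "qnum (inverse s) (Suc j) = inverse s ^ j * qnum s (Suc j)"
    using assms(1) by (simp add: power_inverse field_simps)
  have "qnum (inverse s) M = qnum (inverse s) a + inverse s ^ a * qnum (inverse s) (Suc j)"
    unfolding M by (rule qnum_add)
  also have "inverse s ^ a * qnum (inverse s) (Suc j) = inverse s ^ (M - 1) * qnum s (Suc j)"
    unfolding q1 M by (simp add: power_add mult.assoc)
  finally show ?thesis unfolding a_def by simp
qed

lemma pow_diff: assumes "absv a \<le> 1" "absv b \<le> 1" shows "absv (a ^ n - b ^ n) \<le> absv (a - b)"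
proof (induction n)
  case 0 then show ?case using nn by simp
next
  case (Suc n)
  have bn: "absv (b ^ n) \<le> 1"
  proof (induction n)
    case 0 then show ?case using one by simp
  next
    case (Suc n) then show ?case using assms(2) nn by (simp add: mul mult_le_one)
  qed
  have "a ^ Suc n - b ^ Suc n = a * (a ^ n - b ^ n) + (a - b) * b ^ n" by (simp add: algebra_simps)
  hence "absv (a ^ Suc n - b ^ Suc n) \<le> max (absv a * absv (a ^ n - b ^ n)) (absv (a - b) * absv (b ^ n))"
    by (simp only: ul flip: mul)
  moreover have "absv a * absv (a ^ n - b ^ n) \<le> 1 * absv (a - b)"
    by (rule mult_mono) (use Suc assms(1) nn in auto)
  moreover have "absv (a - b) * absv (b ^ n) \<le> absv (a - b)"
    using bn nn by (simp add: mult_left_le)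
  ultimately show ?case by simp
qed


lemma ne_of_abs1: "absv x = 1 \<Longrightarrow> x \<noteq> 0" by (metis z0 zero_neq_one)

lemma inv_pow_pred: fixes u :: 'a assumes "u \<noteq> 0" shows "inverse u ^ (p ^ N - 1) = u * inverse u ^ (p ^ N)"
proof -
  obtain m where m: "p ^ N = Suc m" using pos by (metis gr0_implies_Suc pos_int_cases zero_less_power less_trans zero_less_one)
  have "u * inverse u = 1" by (rule right_inverse[OF assms])
  hence "u * (inverse u * inverse u ^ m) = inverse u ^ m" by (metis mult.assoc mult_1)
  thus ?thesis unfolding m by simp
qed

lemma rel:
  assumes uq: "un q" and h: "h \<ge> 1" and n: "n \<ge> 1"
    and cF: "conv (RS q (\<lambda>x. (q ^ (h - 1)) ^ x * (1 - qnum (q ^ \<alpha>) x) ^ n)) IF"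
  shows "conv (RS (inverse q) (\<lambda>\<xi>. inverse q ^ ((h - 1) * \<xi>) * qnum (inverse q ^ \<alpha>) \<xi> ^ n))
           ((IF - (1 + q)) / q ^ (h + 1))"
proof -
  define t where "t = q ^ (h - 1)"
  define s where "s = q ^ \<alpha>"
  have ut: "un t" unfolding t_def by (rule un_pow[OF uq])
  have us: "un s" unfolding s_def by (rule un_pow[OF uq])
  have uis: "un (inverse s)" by (rule un_inv[OF us])
  have q0: "q \<noteq> 0" by (rule un_nz[OF uq])
  have t0: "t \<noteq> 0" by (rule un_nz[OF ut])
  have s0: "s \<noteq> 0" by (rule un_nz[OF us])
  have q1: "1 + q \<noteq> 0" by (rule ne_of_abs1[OF un_plus1[OF uq]])
  have qM: "1 + q ^ (p ^ N) \<noteq> 0" for N by (rule ne_of_abs1[OF un_plus1[OF un_pow[OF uq]]])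
  define F where "F x = t ^ x * (1 - qnum s x) ^ n" for x
  define \<phi> where "\<phi> j = t ^ j * (- s * qnum s (Suc j)) ^ n" for j
  define \<psi> where "\<psi> N j = t ^ j * (qnum (inverse s) (p ^ N) - inverse s ^ (p ^ N - 1) * qnum s (Suc j)) ^ n" for N j
  define w where "w N = inverse t ^ (p ^ N)" for N
  define P where "P N = (1 + q) / (1 + q ^ (p ^ N))" for N
  define E where "E N = P N * (1 + F (p ^ N) * q ^ (p ^ N)) - q * (P N * (F (Suc (p ^ N)) * q ^ (p ^ N)))" for N
  define g where "g \<xi> = inverse q ^ ((h - 1) * \<xi>) * qnum (inverse q ^ \<alpha>) \<xi> ^ n" for \<xi>
  have R1: "RS (inverse q) g N = inverse t ^ (p ^ N - 1) * RS q (\<psi> N) N" for N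
    unfolding RS_alt g_def \<psi>_def t_def s_def by (rule refl_sum0[OF q0 qM[of N] odd_M[of N]])
  have R2: "inverse t ^ (p ^ N - 1) = t * w N" for N unfolding w_def by (rule inv_pow_pred[OF t0])
  have R3: "q ^ 2 * t ^ 2 * RS q \<phi> N = RS q F N - E N" for N
  proof -
    define M where "M = p ^ N"
    have "F (Suc (Suc j)) = t ^ 2 * \<phi> j" for j
      unfolding F_def \<phi>_def qnum_Suc1[of s "Suc j"] by (simp add: power2_eq_square)
    hence FSS: "RS q (\<lambda>x. F (Suc (Suc x))) N = t ^ 2 * RS q \<phi> N" by (simp add: RS_cmult)
    have F1: "F (Suc 0) = 0" unfolding F_def using n by (simp add: qnum_Suc1)
    have F0: "F 0 = 1" unfolding F_def by simp
    have a: "q * RS q (\<lambda>x. F (Suc (Suc x))) N = P N * (F (Suc M) * q ^ M) - RS q (\<lambda>x. F (Suc x)) N"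
      using RS_func[OF q1, of "\<lambda>x. F (Suc x)" N] F1 unfolding P_def M_def by (simp add: algebra_simps)
    have b: "q * RS q (\<lambda>x. F (Suc x)) N = P N * (1 + F M * q ^ M) - RS q F N"
      using RS_func[OF q1, of F N] F0 unfolding P_def M_def by (simp add: algebra_simps)
    have "q ^ 2 * t ^ 2 * RS q \<phi> N = q * (q * RS q (\<lambda>x. F (Suc (Suc x))) N)"
      unfolding FSS by (simp add: power2_eq_square mult_ac)
    also have "\<dots> = q * (P N * (F (Suc M) * q ^ M)) - q * RS q (\<lambda>x. F (Suc x)) N"
      unfolding a by (simp add: algebra_simps)
    also have "\<dots> = RS q F N - E N" unfolding b E_def M_def by (simp add: algebra_simps)
    finally show ?thesis .
  qed
  define \<delta> where "\<delta> N = absv (qnum (inverse s) (p ^ N)) + absv (s - inverse s ^ (p ^ N - 1))" for N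
  have bd: "absv (\<psi> N j - \<phi> j) \<le> \<delta> N" for N j
  proof -
    define \<epsilon> where "\<epsilon> = qnum (inverse s) (p ^ N)"
    define s' where "s' = inverse s ^ (p ^ N - 1)"
    define x where "x = qnum s (Suc j)"
    define a where "a = \<epsilon> - s' * x"
    define b where "b = - s * x"
    have ax: "absv x \<le> 1" unfolding x_def by (rule qnum_bd[OF us])
    have as': "absv s' = 1" unfolding s'_def by (rule un_pow_abs[OF uis])
    have ae: "absv \<epsilon> \<le> 1" unfolding \<epsilon>_def by (rule qnum_bd[OF uis])
    have aa: "absv a \<le> 1"
    proof -
      have "absv a \<le> max (absv \<epsilon>) (absv (s' * x))" unfolding a_def by (rule ul_diff)
      thus ?thesis using ae ax as' by (simp add: mul)
    qed
    have ab: "absv b \<le> 1" unfolding b_def using ax un_abs[OF us] by (simp add: mul minus)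
    have "\<psi> N j - \<phi> j = t ^ j * (a ^ n - b ^ n)"
      unfolding \<psi>_def \<phi>_def a_def b_def \<epsilon>_def s'_def x_def by (simp add: algebra_simps)
    hence "absv (\<psi> N j - \<phi> j) = absv (a ^ n - b ^ n)" using un_pow_abs[OF ut, of j] by (simp add: mul)
    also have "\<dots> \<le> absv (a - b)" by (rule pow_diff[OF aa ab])
    also have "a - b = \<epsilon> + (s - s') * x" unfolding a_def b_def by (simp add: algebra_simps)
    also have "absv \<dots> \<le> absv \<epsilon> + absv ((s - s') * x)" by (rule tri)
    also have "\<dots> \<le> absv \<epsilon> + absv (s - s')"
      using ax nn[of "s - s'"] by (simp add: mul mult_left_le)
    finally show ?thesis unfolding \<delta>_def \<epsilon>_def s'_def .
  qed
  have \<delta>0: "\<delta> \<longlonglongrightarrow> 0"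
  proof -
    have c1: "(\<lambda>N. absv (qnum (inverse s) (p ^ N))) \<longlonglongrightarrow> 0"
      using conv_abs[OF qnum_M[OF uis]] by simp
    have "conv (\<lambda>N. s * inverse s ^ (p ^ N)) (s * 1)" by (rule conv_mult[OF conv_const key[OF uis]])
    hence "conv (\<lambda>N. s - s * inverse s ^ (p ^ N)) (s - s * 1)" by (rule conv_diff[OF conv_const])
    hence "(\<lambda>N. absv (s - s * inverse s ^ (p ^ N))) \<longlonglongrightarrow> 0" using conv_abs by fastforce
    hence c2: "(\<lambda>N. absv (s - inverse s ^ (p ^ N - 1))) \<longlonglongrightarrow> 0" by (simp only: inv_pow_pred[OF s0])
    show ?thesis unfolding \<delta>_def using tendsto_add_zero[OF c1 c2] .
  qed
  have R4: "conv (\<lambda>N. RS q (\<psi> N) N - RS q \<phi> N) 0"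
    unfolding conv_def
  proof (rule tz_le[OF _ \<delta>0])
    fix N
    have "absv (RS q (\<lambda>j. \<psi> N j - \<phi> j) N) \<le> \<delta> N"
      by (rule RS_bound[OF uq bd]) (unfold \<delta>_def, simp add: nn add_nonneg_nonneg)
    thus "absv (RS q (\<psi> N) N - RS q \<phi> N - 0) \<le> \<delta> N" by (simp add: RS_diff)
  qed
  have ht: "q ^ (h + 1) = q ^ 2 * t"
  proof -
    have e: "h + 1 = 2 + (h - 1)" using h by simp
    show ?thesis unfolding t_def by (subst e) (rule power_add)
  qed
  have eq: "q ^ (h + 1) * RS (inverse q) g N = w N * (RS q F N - E N + q ^ 2 * t ^ 2 * (RS q (\<psi> N) N - RS q \<phi> N))" for N
  proof -
    have "q ^ (h + 1) * RS (inverse q) g N = w N * (q ^ 2 * t ^ 2 * RS q (\<psi> N) N)"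
      unfolding R1 R2 ht by (simp add: power2_eq_square mult_ac)
    also have "\<dots> = w N * (q ^ 2 * t ^ 2 * RS q \<phi> N + q ^ 2 * t ^ 2 * (RS q (\<psi> N) N - RS q \<phi> N))"
      by (simp add: algebra_simps)
    also have "\<dots> = w N * (RS q F N - E N + q ^ 2 * t ^ 2 * (RS q (\<psi> N) N - RS q \<phi> N))"
      unfolding R3 ..
    finally show ?thesis .
  qed
  have cw: "conv w 1" unfolding w_def by (rule key[OF un_inv[OF ut]])
  have cF': "conv (\<lambda>N. RS q F N) IF" using cF unfolding F_def t_def s_def by simp
  have cFM: "conv (\<lambda>N. F (p ^ N)) 1"
  proof -
    have "conv (\<lambda>N. t ^ (p ^ N) * (1 - qnum s (p ^ N)) ^ n) (1 * (1 - 0) ^ n)"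
      by (intro conv_mult conv_pow conv_diff conv_const key ut qnum_M us)
    thus ?thesis unfolding F_def by simp
  qed
  have cFS: "conv (\<lambda>N. F (Suc (p ^ N))) 0"
  proof -
    have e: "F (Suc m) = t * t ^ m * ((- s) * qnum s m) ^ n" for m
      unfolding F_def qnum_Suc1 by simp
    have X: "conv (\<lambda>N. t * t ^ (p ^ N) * ((- s) * qnum s (p ^ N)) ^ n) (t * 1 * ((- s) * 0) ^ n)"
      by (intro conv_mult conv_pow conv_const key ut qnum_M us)
    have z: "t * 1 * ((- s) * 0) ^ n = 0" using n by (simp add: power_0_left)
    show ?thesis unfolding e using X[unfolded z] .
  qed
  have two0: "(2::'a) \<noteq> 0" using char0[of 2] by simp
  have cE: "conv E (1 + q)"
  proof -
    have X: "conv E ((1 + q) / 2 * (1 + 1 * 1) - q * ((1 + q) / 2 * (0 * 1)))"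
      unfolding E_def[abs_def] P_def
      by (intro conv_diff conv_mult conv_add conv_const PN uq cFM cFS key)
    have V: "(1 + q) / 2 * (1 + 1 * 1) - q * ((1 + q) / 2 * (0 * 1)) = 1 + q"
      using two0 by (simp add: one_add_one)
    show ?thesis using X[unfolded V] .
  qed
  have "conv (\<lambda>N. w N * (RS q F N - E N + q ^ 2 * t ^ 2 * (RS q (\<psi> N) N - RS q \<phi> N)))
          (1 * (IF - (1 + q) + q ^ 2 * t ^ 2 * 0))"
    by (intro conv_mult conv_add conv_diff cw cF' cE conv_const R4)
  hence "conv (\<lambda>N. q ^ (h + 1) * RS (inverse q) g N) (IF - (1 + q))" unfolding eq[symmetric] by simp
  from conv_div[OF this, of "q ^ (h + 1)"]
  show ?thesis using q0 unfolding g_def by simp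
qed


lemma conv_lin: assumes "finite A" "\<And>i. i \<in> A \<Longrightarrow> conv (RS q (g i)) (V i)"
  shows "conv (RS q (\<lambda>\<xi>. \<Sum>i\<in>A. c i * g i \<xi>)) (\<Sum>i\<in>A. c i * V i)"
proof -
  have e: "RS q (\<lambda>\<xi>. \<Sum>i\<in>A. c i * g i \<xi>) N = (\<Sum>i\<in>A. c i * RS q (g i) N)" for N
    using assms(1) by (simp add: RS_sum RS_cmult)
  show ?thesis unfolding e[abs_def]
    by (rule conv_sum[OF assms(1)]) (rule conv_mult[OF conv_const assms(2)])
qed

lemma main_loc:
  fixes q :: 'a and \<alpha> h n k :: nat
  assumes uq: "un q" and h: "h \<ge> 1" and kn: "k < n"
  shows "(\<Sum>l=0..n-k. of_nat ((n-k) choose l) * (-1) ^ l *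
            (genocchi p absv q \<alpha> h (l+k+1) / of_nat (l+k+1))) =
         (if k = 0 then
            (1 + q) + q ^ (h+1) * (genocchi p absv (inverse q) \<alpha> h (n+1) / of_nat (n+1))
          else
            (\<Sum>l=0..k. of_nat (k choose l) * (-1) ^ (k+l) *
               ((1 + q) + q ^ (h+1) * (genocchi p absv (inverse q) \<alpha> h (n-l+1) / of_nat (n-l+1)))))"
proof -
  define t where "t = q ^ (h - 1)"
  define s where "s = q ^ \<alpha>"
  have ut: "un t" unfolding t_def by (rule un_pow[OF uq])
  have us: "un s" unfolding s_def by (rule un_pow[OF uq])
  have q0: "q \<noteq> 0" by (rule un_nz[OF uq])
  define f where "f i \<xi> = t ^ \<xi> * qnum s \<xi> ^ i" for i \<xi>
  have fe: "(\<lambda>\<xi>. q ^ ((h - 1) * \<xi>) * qnum (q ^ \<alpha>) \<xi> ^ i) = f i" for i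
    unfolding f_def t_def s_def by (simp add: power_mult)
  define L where "L i = ferm_int p absv q (f i)" for i
  have cL: "conv (RS q (f i)) (L i)" for i
  proof -
    obtain L0 where "conv (RS q (f i)) L0" using exist_q[OF uq ut us, of i] unfolding f_def by blast
    moreover from ferm_eq[OF this] have "L i = L0" unfolding L_def .
    ultimately show ?thesis by simp
  qed
  have G: "genocchi p absv q \<alpha> h (Suc i) / of_nat (Suc i) = L i" for i
  proof -
    have "(of_nat (Suc i) :: 'a) \<noteq> 0" by (rule char0) simp
    thus ?thesis unfolding genocchi_def L_def using fe[of i] by simp
  qed
  define F where "F m \<xi> = t ^ \<xi> * (1 - qnum s \<xi>) ^ m" for m \<xi>
  define IF where "IF m = (\<Sum>l\<in>{0..m}. of_nat (m choose l) * (-1) ^ l * L l)" for m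
  have cF: "conv (RS q (F m)) (IF m)" for m
  proof -
    have "F m = (\<lambda>\<xi>. \<Sum>l\<in>{0..m}. (of_nat (m choose l) * (-1) ^ l) * f l \<xi>)"
    proof
      fix \<xi>
      have "F m \<xi> = t ^ \<xi> * (qnum s \<xi> ^ 0 * (1 - qnum s \<xi>) ^ m)" unfolding F_def by simp
      also have "\<dots> = (\<Sum>l\<in>{0..m}. (of_nat (m choose l) * (-1) ^ l) * f l \<xi>)"
        unfolding P1 f_def by (simp add: sum_distrib_left mult_ac)
      finally show "F m \<xi> = (\<Sum>l\<in>{0..m}. (of_nat (m choose l) * (-1) ^ l) * f l \<xi>)" .
    qed
    thus ?thesis unfolding IF_def using conv_lin[where A="{0..m}" and q=q and g=f and V=L and c="\<lambda>l. of_nat (m choose l) * (-1) ^ l"] cL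
      by (simp add: mult.assoc)
  qed
  have H: "(1 + q) + q ^ (h+1) * (genocchi p absv (inverse q) \<alpha> h (m+1) / of_nat (m+1)) = IF m" if m: "m \<ge> 1" for m
  proof -
    have c: "conv (RS q (\<lambda>x. (q ^ (h - 1)) ^ x * (1 - qnum (q ^ \<alpha>) x) ^ m)) (IF m)"
      using cF[of m] unfolding F_def t_def s_def .
    note r = ferm_eq[OF rel[OF uq h m c]]
    have "(of_nat (Suc m) :: 'a) \<noteq> 0" by (rule char0) simp
    hence "genocchi p absv (inverse q) \<alpha> h (m+1) / of_nat (m+1) = (IF m - (1 + q)) / q ^ (h + 1)"
      unfolding genocchi_def using r by simp
    thus ?thesis using q0 by simp
  qed
  have LHS: "(\<Sum>l=0..n-k. of_nat ((n-k) choose l) * (-1) ^ l *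
            (genocchi p absv q \<alpha> h (l+k+1) / of_nat (l+k+1))) =
        (\<Sum>l\<in>{0..n-k}. (of_nat ((n-k) choose l) * (-1) ^ l) * L (l + k))"
    by (rule sum.cong[OF refl]) (simp add: G[of "l + k" for l, simplified])
  show ?thesis
  proof (cases "k = 0")
    case True
    have "(\<Sum>l\<in>{0..n-k}. (of_nat ((n-k) choose l) * (-1) ^ l) * L (l + k)) = IF n"
      unfolding IF_def True by simp
    thus ?thesis unfolding LHS using H[of n] kn True by simp
  next
    case False
    define W where "W \<xi> = t ^ \<xi> * (qnum s \<xi> ^ k * (1 - qnum s \<xi>) ^ (n - k))" for \<xi>
    have W1: "W = (\<lambda>\<xi>. \<Sum>l\<in>{0..n-k}. (of_nat ((n-k) choose l) * (-1) ^ l) * f (l + k) \<xi>)"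
    proof
      fix \<xi> show "W \<xi> = (\<Sum>l\<in>{0..n-k}. (of_nat ((n-k) choose l) * (-1) ^ l) * f (l + k) \<xi>)"
        unfolding W_def P1 f_def by (simp add: sum_distrib_left mult_ac)
    qed
    have W2: "W = (\<lambda>\<xi>. \<Sum>l\<in>{0..k}. (of_nat (k choose l) * (-1) ^ (k + l)) * F (n - l) \<xi>)"
    proof
      fix \<xi>
      have "qnum s \<xi> ^ k * (1 - qnum s \<xi>) ^ (n - k) = (1 - (1 - qnum s \<xi>)) ^ k * (1 - qnum s \<xi>) ^ (n - k)" by simp
      also have "\<dots> = (\<Sum>l\<in>{0..k}. of_nat (k choose l) * (-1) ^ (k + l) * (1 - qnum s \<xi>) ^ (n - l))"
        by (rule P2) (use kn in simp)
      finally show "W \<xi> = (\<Sum>l\<in>{0..k}. (of_nat (k choose l) * (-1) ^ (k + l)) * F (n - l) \<xi>)"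
        unfolding W_def F_def by (simp add: sum_distrib_left mult_ac)
    qed
    have c1: "conv (RS q W) (\<Sum>l\<in>{0..n-k}. (of_nat ((n-k) choose l) * (-1) ^ l) * L (l + k))"
      unfolding W1 by (rule conv_lin) (simp_all add: cL)
    have c2: "conv (RS q W) (\<Sum>l\<in>{0..k}. (of_nat (k choose l) * (-1) ^ (k + l)) * IF (n - l))"
      unfolding W2 by (rule conv_lin) (simp_all add: cF)
    have RHS: "(\<Sum>l=0..k. of_nat (k choose l) * (-1) ^ (k+l) *
               ((1 + q) + q ^ (h+1) * (genocchi p absv (inverse q) \<alpha> h (n-l+1) / of_nat (n-l+1))))
           = (\<Sum>l\<in>{0..k}. (of_nat (k choose l) * (-1) ^ (k + l)) * IF (n - l))"
    proof (rule sum.cong[OF refl])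
      fix l assume "l \<in> {0..k}"
      hence "n - l \<ge> 1" using kn by auto
      thus "of_nat (k choose l) * (-1) ^ (k+l) *
               ((1 + q) + q ^ (h+1) * (genocchi p absv (inverse q) \<alpha> h (n-l+1) / of_nat (n-l+1)))
           = (of_nat (k choose l) * (-1) ^ (k + l)) * IF (n - l)" using H[of "n - l"] by simp
    qed
    show ?thesis unfolding LHS RHS using False conv_unique[OF c1 c2] by simp
  qed
qed

end

theorem mainTheorem6:
  fixes absv :: "'a::field \<Rightarrow> real" and p :: nat and q :: 'a and \<alpha> h n k :: nat
  assumes "prime p" and "odd p" and "Cp_like p absv"
    and "absv (q - 1) < 1" and "h \<ge> 1" and "k < n"
  shows "(\<Sum>l=0..n-k. of_nat ((n-k) choose l) * (-1) ^ l *
            (genocchi p absv q \<alpha> h (l+k+1) / of_nat (l+k+1))) =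
         (if k = 0 then
            (1 + q) + q ^ (h+1) * (genocchi p absv (inverse q) \<alpha> h (n+1) / of_nat (n+1))
          else
            (\<Sum>l=0..k. of_nat (k choose l) * (-1) ^ (k+l) *
               ((1 + q) + q ^ (h+1) * (genocchi p absv (inverse q) \<alpha> h (n-l+1) / of_nat (n-l+1)))))"
proof -
  interpret cpl p absv using assms(1-3) by unfold_locales
  have "un q" unfolding un_def using assms(4) .
  from main_loc[OF this assms(5,6)] show ?thesis .
qed

end
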